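(* Let $h:\mathbb{R}\to[0,+\infty)$ be a continuous multiplicative function (i.e. $h(xy)=h(x)h(y)$ for all $x,y\in\mathbb{R}$) such that $h(t)\ge t$ for all $t$, $h(0)=0$ and $h(1)=1$. Let $f:[a,b]\to\mathbb{R}$ be $h$-mid-convex, i.e. $$f\Big(\frac{x+y}{2}\Big)\le h\Big(\frac12\Big)\big(f(x)+f(y)\big)\quad\text{for all } x,y\in[a,b],$$ and suppose there is $M\in\mathbb{R}$ with $f(x)\le M$ for all $x\in[a,b]$. Then $f$ is continuous. *)

theory Defs
  imports "HOL-Analysis.Analysis"
begin

definition h_mid_convex_on :: "(real \<Rightarrow> real) \<Rightarrow> real set \<Rightarrow> (real \<Rightarrow> real) \<Rightarrow> bool" where
  "h_mid_convex_on h I f \<longleftrightarrow>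
     (\<forall>x\<in>I. \<forall>y\<in>I. f ((x + y) / 2) \<le> h (1/2) * (f x + f y))"

end

theory Submission
  imports Defs
begin

lemma dyadic_step:
  fixes f :: "real \<Rightarrow> real"
  assumes mid: "\<And>x y. x \<in> {a..b} \<Longrightarrow> y \<in> {a..b} \<Longrightarrow> f ((x + y) / 2) \<le> (f x + f y) / 2"
    and x: "x \<in> {a..b}" and y: "y \<in> {a..b}"
  shows "(1 - (1/2)^n) * x + (1/2)^n * y \<in> {a..b} \<and>
         f ((1 - (1/2)^n) * x + (1/2)^n * y) \<le> (1 - (1/2)^n) * f x + (1/2)^n * f y"
proof (induction n)
  case 0
  then show ?case using y by simp
next
  case (Suc n)
  define z where "z = (1 - (1/2::real)^n) * x + (1/2)^n * y"
  have z: "z \<in> {a..b}" and fz: "f z \<le> (1 - (1/2)^n) * f x + (1/2)^n * f y"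
    using Suc z_def by auto
  have eq: "(1 - (1/2::real)^Suc n) * x + (1/2)^Suc n * y = (x + z) / 2"
    unfolding z_def by (simp add: field_simps)
  have "(x + z) / 2 \<in> {a..b}" using x z by auto
  moreover have "f ((x + z) / 2) \<le> (1 - (1/2)^Suc n) * f x + (1/2)^Suc n * f y"
  proof -
    have "f ((x + z) / 2) \<le> (f x + f z) / 2" using mid x z by blast
    also have "\<dots> \<le> (f x + ((1 - (1/2)^n) * f x + (1/2)^n * f y)) / 2" using fz by simp
    also have "\<dots> = (1 - (1/2)^Suc n) * f x + (1/2)^Suc n * f y" by (simp add: field_simps)
    finally show ?thesis .
  qed
  ultimately show ?case by (simp only: eq)
qed

theorem lemma3p1:
  fixes h f :: "real \<Rightarrow> real" and a b M :: real
  assumes h_cont: "continuous_on UNIV h"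
    and h_nonneg: "\<And>x. h x \<ge> 0"
    and h_mult: "\<And>x y. h (x * y) = h x * h y"
    and h_ge: "\<And>t. h t \<ge> t"
    and h0: "h 0 = 0"
    and h1: "h 1 = 1"
    and f_mid: "h_mid_convex_on h {a..b} f"
    and f_bdd: "\<And>x. x \<in> {a..b} \<Longrightarrow> f x \<le> M"
  shows "continuous_on {a<..<b} f"
proof -
  have "h 2 * h (1/2) = 1" using h_mult[of 2 "1/2"] h1 by simp
  moreover have "h 2 \<ge> 2" "h (1/2) \<ge> 1/2" using h_ge by auto
  moreover have "2 * h (1/2) \<le> h 2 * h (1/2)"
    using mult_right_mono[OF \<open>h 2 \<ge> 2\<close> h_nonneg[of "1/2"]] by simp
  ultimately have hh: "h (1/2) = 1/2" by linarith
  have mid: "\<And>x y. x \<in> {a..b} \<Longrightarrow> y \<in> {a..b} \<Longrightarrow> f ((x + y) / 2) \<le> (f x + f y) / 2"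
    using f_mid hh unfolding h_mid_convex_on_def by auto
  have key: "\<bar>f (x0 + u) - f x0\<bar> \<le> (1/2)^n * (M - f x0)"
    if x0: "x0 \<in> {a<..<b}" and u: "\<bar>u\<bar> \<le> min (x0 - a) (b - x0) * (1/2)^n" for x0 u n
  proof -
    define d where "d = min (x0 - a) (b - x0)"
    have d: "d > 0" using x0 d_def by auto
    have p: "(0::real) < (1/2)^n" by simp
    have up: "\<bar>u * 2^n\<bar> \<le> d" using u d_def
      by (simp add: abs_mult power_one_over divide_simps)
    have x0i: "x0 \<in> {a..b}" using x0 by auto
    have bnd: "f (x0 + v) \<le> f x0 + (1/2)^n * (M - f x0)" if v: "\<bar>v\<bar> \<le> d * (1/2)^n" for v
    proof -
      have vp: "\<bar>v * 2^n\<bar> \<le> d" using v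
        by (simp add: abs_mult power_one_over divide_simps)
      have yi: "x0 + v * 2^n \<in> {a..b}" using vp d_def by (auto simp: abs_le_iff)
      have eq: "(1 - (1/2)^n) * x0 + (1/2)^n * (x0 + v * 2^n) = x0 + v"
        by (simp add: field_simps)
      have "f (x0 + v) \<le> (1 - (1/2)^n) * f x0 + (1/2)^n * f (x0 + v * 2^n)"
        using dyadic_step[OF mid x0i yi, of n] eq by simp
      also have "\<dots> \<le> (1 - (1/2)^n) * f x0 + (1/2)^n * M"
        using f_bdd[OF yi] p by (simp add: mult_left_mono)
      finally show ?thesis by (simp add: algebra_simps)
    qed
    have b1: "f (x0 + u) \<le> f x0 + (1/2)^n * (M - f x0)" using bnd u d_def by simp
    have b2: "f (x0 - u) \<le> f x0 + (1/2)^n * (M - f x0)" using bnd[of "- u"] u d_def by simp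
    have ui: "x0 + u \<in> {a..b}" "x0 - u \<in> {a..b}"
    proof -
      have "(1/2::real)^n \<le> 1" by (simp add: power_le_one)
      then have "\<bar>u\<bar> \<le> d" using u d_def d
        by (smt (verit) mult_left_le)
      then show "x0 + u \<in> {a..b}" "x0 - u \<in> {a..b}" using d_def by (auto simp: abs_le_iff)
    qed
    have "f x0 \<le> (f (x0 + u) + f (x0 - u)) / 2"
      using mid[OF ui] by simp
    then show ?thesis using b1 b2 by (simp add: abs_le_iff)
  qed
  show ?thesis
  proof (subst continuous_on_eq_continuous_at, simp, intro ballI)
    fix x0 assume x0: "x0 \<in> {a<..<b}"
    show "isCont f x0"
      unfolding continuous_at_eps_delta
    proof (intro allI impI)
      fix e :: real assume e: "e > 0"
      have Mf: "M - f x0 \<ge> 0" using f_bdd x0 by auto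
      obtain n where n: "(1/2::real)^n < e / (M - f x0 + 1)"
        using real_arch_pow_inv[of "e / (M - f x0 + 1)" "1/2"] e Mf by auto
      define d where "d = min (x0 - a) (b - x0)"
      have d: "d > 0" using x0 d_def by auto
      show "\<exists>da>0. \<forall>x'. dist x' x0 < da \<longrightarrow> dist (f x') (f x0) < e"
      proof (intro exI conjI allI impI)
        show "d * (1/2)^n > 0" using d by simp
        fix x' assume "dist x' x0 < d * (1/2)^n"
        then have "\<bar>x' - x0\<bar> \<le> d * (1/2)^n" by (simp add: dist_real_def)
        then have "\<bar>f (x0 + (x' - x0)) - f x0\<bar> \<le> (1/2)^n * (M - f x0)"
          using key[OF x0] d_def by blast
        also have "\<dots> \<le> (1/2)^n * (M - f x0 + 1)" by simp
        also have "\<dots> < e" using n Mf by (simp add: pos_less_divide_eq)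
        finally show "dist (f x') (f x0) < e" by (simp add: dist_real_def)
      qed
    qed
  qed
qed

end
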